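(* Let $\mathcal{A}\in\mathbb{R}^{n\times n\times n\times n}$ be a real CPS tensor that is not symmetric. Then $\mathcal{A}$ has a CPS decomposition of the form \[ \mathcal{A}=\sum_{i=1}^{R_1}\lambda_i\big(a_i\otimes a_i\otimes\bar a_i\otimes\bar a_i+\bar a_i\otimes\bar a_i\otimes a_i\otimes a_i\big)+\sum_{j=1}^{R_2}\mu_j\, b_j\otimes b_j\otimes b_j\otimes b_j, \] where $\lambda_i,\mu_j\in\mathbb{R}$, $a_i\in\mathbb{C}^n\setminus\mathbb{R}^n$ and $b_j\in\mathbb{R}^n$.
   Context: A tensor $\mathcal{A}\in\mathbb{C}^{n\times n\times n\times n}$ is conjugate partial-symmetric (CPS) if $\mathcal{A}_{ijkl}=\overline{\mathcal{A}_{klij}}$ and $\mathcal{A}_{ijkl}=\mathcal{A}_{jikl}=\mathcal{A}_{ijlk}$ for all indices; a real CPS tensor has real entries. A tensor is symmetric if its entries are invariant under all permutations of the four indices. A CPS decomposition is a representation $\sum_i\lambda_i a_i\otimes a_i\otimes\bar a_i\otimes\bar a_i$ with $\lambda_i\in\mathbb{R}$, $a_i\in\mathbb{C}^n$. *)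

theory Defs
  imports Complex_Main "HOL-Combinatorics.Permutations"
begin

text \<open>Fourth-order tensors in C^(n x n x n x n) are represented as functions
  nat => nat => nat => nat => complex, only the entries with all indices < n
  being relevant. Vectors in C^n are functions nat => complex, entries < n relevant.\<close>

type_synonym tensor4 = "nat \<Rightarrow> nat \<Rightarrow> nat \<Rightarrow> nat \<Rightarrow> complex"

definition cps_tensor :: "nat \<Rightarrow> tensor4 \<Rightarrow> bool" where
  "cps_tensor n A \<longleftrightarrow>
     (\<forall>i<n. \<forall>j<n. \<forall>k<n. \<forall>l<n.
        A i j k l = cnj (A k l i j) \<and> A i j k l = A j i k l \<and> A i j k l = A i j l k)"

definition real_tensor :: "nat \<Rightarrow> tensor4 \<Rightarrow> bool" where
  "real_tensor n A \<longleftrightarrow> (\<forall>i<n. \<forall>j<n. \<forall>k<n. \<forall>l<n. A i j k l \<in> \<real>)"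

definition symmetric_tensor :: "nat \<Rightarrow> tensor4 \<Rightarrow> bool" where
  "symmetric_tensor n A \<longleftrightarrow>
     (\<forall>x::nat\<Rightarrow>nat. (\<forall>m<4. x m < n) \<longrightarrow>
        (\<forall>p::nat\<Rightarrow>nat. p permutes {0..<4} \<longrightarrow>
           A (x (p 0)) (x (p 1)) (x (p 2)) (x (p 3)) = A (x 0) (x 1) (x 2) (x 3)))"

definition outer4 :: "(nat \<Rightarrow> complex) \<Rightarrow> (nat \<Rightarrow> complex) \<Rightarrow> (nat \<Rightarrow> complex) \<Rightarrow> (nat \<Rightarrow> complex) \<Rightarrow> tensor4" where
  "outer4 u v w z = (\<lambda>i j k l. u i * v j * w k * z l)"

definition conj_vec :: "(nat \<Rightarrow> complex) \<Rightarrow> (nat \<Rightarrow> complex)" where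
  "conj_vec a = (\<lambda>i. cnj (a i))"

end

theory Submission
  imports Defs
begin

definition Cterm :: "(nat \<Rightarrow> complex) \<Rightarrow> nat \<Rightarrow> nat \<Rightarrow> nat \<Rightarrow> nat \<Rightarrow> complex" where
  "Cterm a p q r s = outer4 a a (conj_vec a) (conj_vec a) p q r s + outer4 (conj_vec a) (conj_vec a) a a p q r s"

definition gsum :: "(real \<times> (nat \<Rightarrow> complex)) list \<Rightarrow> nat \<Rightarrow> nat \<Rightarrow> nat \<Rightarrow> nat \<Rightarrow> complex" where
  "gsum L p q r s = sum_list (map (\<lambda>(c,a). complex_of_real c * Cterm a p q r s) L)"

definition trip :: "real \<Rightarrow> (nat \<Rightarrow> complex) \<Rightarrow> (nat \<Rightarrow> complex) \<Rightarrow> (real \<times> (nat \<Rightarrow> complex)) list" where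
  "trip c x y = [(c/2, \<lambda>m. x m + y m), (c/2, \<lambda>m. x m - y m), (-c, \<lambda>m. x m + \<i> * y m)]"

lemma key:
  fixes x y :: "nat \<Rightarrow> complex"
  assumes hx: "\<And>m. cnj (x m) = x m" and hy: "\<And>m. cnj (y m) = y m"
  shows "gsum (trip c x y) p q r s
     = complex_of_real c * 4 * (x p * x q * y r * y s + y p * y q * x r * x s)"
proof -
  have c1: "cnj (x m + \<i> * y m) = x m - \<i> * y m" for m using hx hy by simp
  show ?thesis
    unfolding gsum_def trip_def Cterm_def outer4_def conj_vec_def
    using hx hy c1
    by (simp add: algebra_simps)
qed

definition ev :: "nat \<Rightarrow> nat \<Rightarrow> complex" where "ev i = (\<lambda>m. if m = i then 1 else 0)"
definition vx :: "nat \<Rightarrow> nat \<Rightarrow> real \<Rightarrow> nat \<Rightarrow> complex" where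
  "vx i j \<sigma> = (\<lambda>m. ev i m + complex_of_real \<sigma> * ev j m)"

lemma vx_real: "cnj (vx i j \<sigma> m) = vx i j \<sigma> m"
  by (simp add: vx_def ev_def)

definition termlist :: "real \<Rightarrow> nat \<Rightarrow> nat \<Rightarrow> nat \<Rightarrow> nat \<Rightarrow> (real \<times> (nat \<Rightarrow> complex)) list" where
  "termlist \<alpha> i j k l = concat (map (\<lambda>(s1,s2). trip (\<alpha>*s1*s2/128) (vx i j s1) (vx k l s2))
      [(1,1),(1,-1),(-1,1),(-1,-1)])"

definition Sm :: "nat \<Rightarrow> nat \<Rightarrow> nat \<Rightarrow> nat \<Rightarrow> complex" where
  "Sm i j p q = ev i p * ev j q + ev j p * ev i q"

lemma gsum_append: "gsum (L1 @ L2) p q r s = gsum L1 p q r s + gsum L2 p q r s"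
  by (simp add: gsum_def)

lemma gsum_concat: "gsum (concat Ls) p q r s = sum_list (map (\<lambda>L. gsum L p q r s) Ls)"
  by (induction Ls) (simp_all add: gsum_append, simp add: gsum_def)

lemma alg:
  fixes A :: real and X1 X2 Y1 Y2 :: "nat \<Rightarrow> complex"
  shows "(\<Sum>(s,t)\<leftarrow>[(1::real,1::real),(1,-1),(-1,1),(-1,-1)]. complex_of_real (A * s * t / 128) * 4 * ((X1 p + of_real s * X2 p) * (X1 q + of_real s * X2 q) * (Y1 r + of_real t * Y2 r) * (Y1 s' + of_real t * Y2 s') + (Y1 p + of_real t * Y2 p) * (Y1 q + of_real t * Y2 q) * (X1 r + of_real s * X2 r) * (X1 s' + of_real s * X2 s'))) =
    of_real A / 8 * ((X1 p * X2 q + X2 p * X1 q) * (Y1 r * Y2 s' + Y2 r * Y1 s') + (Y1 p * Y2 q + Y2 p * Y1 q) * (X1 r * X2 s' + X2 r * X1 s'))"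
  by (simp add: field_simps)

lemma tuple: "gsum (termlist \<alpha> i j k l) p q r s =
   complex_of_real \<alpha> / 8 * (Sm i j p q * Sm k l r s + Sm k l p q * Sm i j r s)"
proof -
  have "gsum (termlist \<alpha> i j k l) p q r s =
    (\<Sum>(s1,s2)\<leftarrow>[(1::real,1::real),(1,-1),(-1,1),(-1,-1)]. complex_of_real (\<alpha> * s1 * s2 / 128) * 4 * (vx i j s1 p * vx i j s1 q * vx k l s2 r * vx k l s2 s + vx k l s2 p * vx k l s2 q * vx i j s1 r * vx i j s1 s))"
    unfolding termlist_def gsum_concat map_map
    by (intro arg_cong[where f=sum_list] map_cong refl) (auto simp: key vx_real)
  also have "\<dots> = complex_of_real \<alpha> / 8 * (Sm i j p q * Sm k l r s + Sm k l p q * Sm i j r s)"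
    unfolding vx_def Sm_def by (rule alg)
  finally show ?thesis .
qed

lemma ev_collapse: assumes "a < n" shows "(\<Sum>i<n. ev i a * G i) = G a"
proof -
  have "(\<Sum>i<n. ev i a * G i) = (\<Sum>i<n. if i = a then G i else 0)"
    by (rule sum.cong) (auto simp: ev_def)
  also have "\<dots> = G a" using \<open>a < n\<close> by (simp add: sum.delta')
  finally show ?thesis .
qed

lemma collapse4:
  assumes "a < n" "b < n" "c < n" "d < n"
  shows "(\<Sum>i<n. \<Sum>j<n. \<Sum>k<n. \<Sum>l<n. F i j k l * (ev i a * ev j b * ev k c * ev l d)) = F a b c d"
proof -
  have "(\<Sum>i<n. \<Sum>j<n. \<Sum>k<n. \<Sum>l<n. F i j k l * (ev i a * ev j b * ev k c * ev l d))
     = (\<Sum>i<n. ev i a * (\<Sum>j<n. ev j b * (\<Sum>k<n. ev k c * (\<Sum>l<n. ev l d * F i j k l))))"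
    by (simp add: sum_distrib_left mult_ac)
  also have "\<dots> = F a b c d" using assms by (simp add: ev_collapse)
  finally show ?thesis .
qed

definition s4 :: "nat \<Rightarrow> (nat \<Rightarrow> nat \<Rightarrow> nat \<Rightarrow> nat \<Rightarrow> complex) \<Rightarrow> complex" where
  "s4 n F = (\<Sum>i<n. \<Sum>j<n. \<Sum>k<n. \<Sum>l<n. F i j k l)"

lemma s4_add: "s4 n (\<lambda>i j k l. F i j k l + G i j k l) = s4 n F + s4 n G"
  by (simp add: s4_def sum.distrib)

lemma s4_mult: "s4 n (\<lambda>i j k l. c * F i j k l) = c * s4 n F"
  by (simp add: s4_def sum_distrib_left)

lemma collapse4': "a < n \<Longrightarrow> b < n \<Longrightarrow> c < n \<Longrightarrow> d < n \<Longrightarrow>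
   s4 n (\<lambda>i j k l. F i j k l * (ev i a * ev j b * ev k c * ev l d)) = F a b c d"
  unfolding s4_def by (rule collapse4)

lemma represent:
  assumes cps: "cps_tensor n A" and re: "real_tensor n A"
    and pqrs: "p < n" "q < n" "r < n" "s < n"
  shows "A p q r s = (\<Sum>i<n. \<Sum>j<n. \<Sum>k<n. \<Sum>l<n. complex_of_real (Re (A i j k l)) / 8 * (Sm i j p q * Sm k l r s + Sm k l p q * Sm i j r s))"
proof -
  define B where "B i j k l = complex_of_real (Re (A i j k l))" for i j k l
  have BA: "B i j k l = A i j k l" if "i<n" "j<n" "k<n" "l<n" for i j k l
    using re that unfolding real_tensor_def B_def by (auto simp: Reals_def)
  have sym1: "A i j k l = A j i k l" and sym2: "A i j k l = A i j l k" and sym3: "A i j k l = A k l i j"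
    if "i<n" "j<n" "k<n" "l<n" for i j k l
  proof -
    have C: "A i j k l = cnj (A k l i j) \<and> A i j k l = A j i k l \<and> A i j k l = A i j l k"
      using cps that unfolding cps_tensor_def by blast
    have R: "A k l i j \<in> \<real>" using re that unfolding real_tensor_def by blast
    show "A i j k l = A j i k l" "A i j k l = A i j l k" using C by auto
    show "A i j k l = A k l i j" using C R by (simp add: Reals_cnj_iff)
  qed
  have summ: "B i j k l / 8 * (Sm i j p q * Sm k l r s + Sm k l p q * Sm i j r s) =
    1/8 * (B i j k l * (ev i p*ev j q*ev k r*ev l s) + B i j k l * (ev i p * ev j q * ev k s * ev l r)
     + B i j k l * (ev i q*ev j p*ev k r*ev l s) + B i j k l * (ev i q*ev j p*ev k s*ev l r)
     + B i j k l * (ev i r*ev j s*ev k p*ev l q) + B i j k l * (ev i s * ev j r * ev k p*ev l q)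
     + B i j k l * (ev i r*ev j s*ev k q*ev l p) + B i j k l * (ev i s*ev j r*ev k q*ev l p))" for i j k l
    unfolding Sm_def by (simp add: algebra_simps)
  have "(\<Sum>i<n. \<Sum>j<n. \<Sum>k<n. \<Sum>l<n. B i j k l / 8 * (Sm i j p q * Sm k l r s + Sm k l p q * Sm i j r s))
    = s4 n (\<lambda>i j k l. B i j k l / 8 * (Sm i j p q * Sm k l r s + Sm k l p q * Sm i j r s))"
    by (simp only: s4_def)
  also have "\<dots> = 1/8 * (B p q r s + B p q s r + B q p r s + B q p s r + B r s p q + B s r p q + B r s q p + B s r q p)"
    by (simp only: summ s4_mult s4_add collapse4' pqrs)
  also have "\<dots> = A p q r s"
  proof -
    have e1: "A p q s r = A p q r s" using sym2[OF pqrs] by simp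
    have e2: "A q p r s = A p q r s" using sym1[OF pqrs] by simp
    have e3: "A q p s r = A p q r s" using sym1[OF pqrs] sym2[of q p r s] pqrs by simp
    have e4: "A r s p q = A p q r s" using sym3[OF pqrs] by simp
    have e5: "A s r p q = A p q r s" using e4 sym1[of r s p q] pqrs by simp
    have e6: "A r s q p = A p q r s" using e4 sym2[of r s p q] pqrs by simp
    have e7: "A s r q p = A p q r s" using e6 sym1[of r s q p] pqrs by simp
    show ?thesis using pqrs by (simp add: BA e1 e2 e3 e4 e5 e6 e7)
  qed
  finally show ?thesis by (simp add: B_def)
qed

lemma sum_list_upt0[simp]: "sum_list (map f [0..<n]) = (\<Sum>i<n. f i)"
  by (simp add: sum_set_upt_conv_sum_list_nat[symmetric] atLeast0LessThan)

lemma sum_shift1: "(\<Sum>i=1..(m::nat). h (i - 1)) = (\<Sum>i<m. (h i :: 'a::comm_monoid_add))"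
  by (induction m) (simp_all add: atLeastAtMostSuc_conv add.commute)

lemma sum_nth_list: "(\<Sum>i=1..length xs. f (xs ! (i - 1))) = sum_list (map f xs)"
  using sum_shift1[of "\<lambda>i. f (xs ! i)" "length xs"]
  by (simp add: sum_list_sum_nth atLeast0LessThan)

lemma sum_list_filter_split: "sum_list (map (f :: _ \<Rightarrow> 'a::comm_monoid_add) xs) = sum_list (map f (filter P xs)) + sum_list (map f (filter (\<lambda>x. \<not> P x) xs))"
  by (induction xs) (simp_all add: add.left_commute add.assoc)

theorem corollary4p5:
  fixes n :: nat and A :: tensor4
  assumes "cps_tensor n A" and "real_tensor n A" and "\<not> symmetric_tensor n A"
  shows "\<exists>(R1::nat) (R2::nat) (lam::nat \<Rightarrow> real) (a::nat \<Rightarrow> nat \<Rightarrow> complex)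
            (mu::nat \<Rightarrow> real) (b::nat \<Rightarrow> nat \<Rightarrow> complex).
           (\<forall>i\<in>{1..R1}. \<exists>k<n. a i k \<notin> \<real>) \<and>
           (\<forall>j\<in>{1..R2}. \<forall>k<n. b j k \<in> \<real>) \<and>
           (\<forall>p<n. \<forall>q<n. \<forall>r<n. \<forall>s<n.
              A p q r s =
                (\<Sum>i=1..R1. complex_of_real (lam i) *
                   (outer4 (a i) (a i) (conj_vec (a i)) (conj_vec (a i)) p q r s
                    + outer4 (conj_vec (a i)) (conj_vec (a i)) (a i) (a i) p q r s))
              + (\<Sum>j=1..R2. complex_of_real (mu j) * outer4 (b j) (b j) (b j) (b j) p q r s))"
  proof -
  note cps = assms(1) and re = assms(2)
  define L where "L = concat (map (\<lambda>i. concat (map (\<lambda>j. concat (map (\<lambda>k. concat (map (\<lambda>l.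
      termlist (Re (A i j k l)) i j k l) [0..<n])) [0..<n])) [0..<n])) [0..<n])"
  have repr: "A p q r s = gsum L p q r s" if "p<n" "q<n" "r<n" "s<n" for p q r s
  proof -
    have "gsum L p q r s = (\<Sum>i<n. \<Sum>j<n. \<Sum>k<n. \<Sum>l<n. gsum (termlist (Re (A i j k l)) i j k l) p q r s)"
      unfolding L_def gsum_concat map_map o_def sum_list_upt0 ..
    also have "\<dots> = (\<Sum>i<n. \<Sum>j<n. \<Sum>k<n. \<Sum>l<n. complex_of_real (Re (A i j k l)) / 8 * (Sm i j p q * Sm k l r s + Sm k l p q * Sm i j r s))"
      by (simp only: tuple)
    finally show ?thesis using represent[OF cps re that] by simp
  qed
  define nr where "nr a = (\<exists>k<n. a k \<notin> \<real>)" for a :: "nat \<Rightarrow> complex"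
  define L1 where "L1 = filter (\<lambda>x. nr (snd x)) L"
  define L2 where "L2 = filter (\<lambda>x. \<not> nr (snd x)) L"
  show ?thesis
  proof (rule exI[where x="length L1"], rule exI[where x="length L2"],
      rule exI[where x="\<lambda>i. fst (L1 ! (i - 1))"], rule exI[where x="\<lambda>i. snd (L1 ! (i - 1))"],
      rule exI[where x="\<lambda>j. 2 * fst (L2 ! (j - 1))"], rule exI[where x="\<lambda>j. snd (L2 ! (j - 1))"],
      intro conjI allI impI ballI)
    fix i assume "i \<in> {1..length L1}"
    then have "L1 ! (i - 1) \<in> set L1" by auto
    then show "\<exists>k<n. snd (L1 ! (i - 1)) k \<notin> \<real>" unfolding L1_def nr_def by auto
  next
    fix j k assume "j \<in> {1..length L2}" "k < n"
    then have "L2 ! (j - 1) \<in> set L2" by auto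
    then show "snd (L2 ! (j - 1)) k \<in> \<real>" using \<open>k<n\<close> unfolding L2_def nr_def by auto
  next
    fix p q r s assume pqrs: "p<n" "q<n" "r<n" "s<n"
    define f where "f = (\<lambda>(c::real, a). complex_of_real c * Cterm a p q r s)"
    have "A p q r s = sum_list (map f L)" using repr[OF pqrs] unfolding gsum_def f_def by simp
    also have "\<dots> = sum_list (map f L1) + sum_list (map f L2)"
      unfolding L1_def L2_def by (rule sum_list_filter_split)
    also have "sum_list (map f L1) = (\<Sum>i=1..length L1. complex_of_real (fst (L1 ! (i - 1))) *
                   (outer4 (snd (L1 ! (i - 1))) (snd (L1 ! (i - 1))) (conj_vec (snd (L1 ! (i - 1)))) (conj_vec (snd (L1 ! (i - 1)))) p q r s
                    + outer4 (conj_vec (snd (L1 ! (i - 1)))) (conj_vec (snd (L1 ! (i - 1)))) (snd (L1 ! (i - 1))) (snd (L1 ! (i - 1))) p q r s))"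
      unfolding sum_nth_list[symmetric] f_def by (simp add: split_beta Cterm_def)
    also have "sum_list (map f L2) = sum_list (map (\<lambda>x. complex_of_real (2 * fst x) * outer4 (snd x) (snd x) (snd x) (snd x) p q r s) L2)"
    proof (rule arg_cong[where f=sum_list], rule map_cong[OF refl])
      fix x assume "x \<in> set L2"
      then have hr: "\<And>k. k < n \<Longrightarrow> cnj (snd x k) = snd x k" unfolding L2_def nr_def
        by (auto simp: Reals_cnj_iff)
      show "f x = complex_of_real (2 * fst x) * outer4 (snd x) (snd x) (snd x) (snd x) p q r s"
        unfolding f_def using hr[OF pqrs(1)] hr[OF pqrs(2)] hr[OF pqrs(3)] hr[OF pqrs(4)]
        by (simp add: split_beta Cterm_def outer4_def conj_vec_def algebra_simps)
    qed
    also have "\<dots> = (\<Sum>j=1..length L2. complex_of_real (2 * fst (L2 ! (j - 1))) * outer4 (snd (L2 ! (j - 1))) (snd (L2 ! (j - 1))) (snd (L2 ! (j - 1))) (snd (L2 ! (j - 1))) p q r s)"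
      by (rule sum_nth_list[symmetric])
    finally show "A p q r s = (\<Sum>i=1..length L1. complex_of_real (fst (L1 ! (i - 1))) *
                   (outer4 (snd (L1 ! (i - 1))) (snd (L1 ! (i - 1))) (conj_vec (snd (L1 ! (i - 1)))) (conj_vec (snd (L1 ! (i - 1)))) p q r s
                    + outer4 (conj_vec (snd (L1 ! (i - 1)))) (conj_vec (snd (L1 ! (i - 1)))) (snd (L1 ! (i - 1))) (snd (L1 ! (i - 1))) p q r s))
       + (\<Sum>j=1..length L2. complex_of_real (2 * fst (L2 ! (j - 1))) * outer4 (snd (L2 ! (j - 1))) (snd (L2 ! (j - 1))) (snd (L2 ! (j - 1))) (snd (L2 ! (j - 1))) p q r s)" .
  qed
qed

end
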